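(* Let $\alpha\in(0,1]$, $\beta\in(0,\alpha]$. For any $d_s$-dimensional cone $\mathcal{C}^s\subset\mathbb{R}^d$ transverse to $\mathbb{R}^{d_u}\times\{0\}$, there exists a constant $C_\#$ depending only on $\mathcal{C}^s$ such that for any $m\in\mathbb{R}^d$, any $1<C_0<C_1/2$ and any $\phi_F\in\mathcal{F}(m,\mathcal{C}^s,C_0,C_1)$, the map $\phi_F$ is a diffeomorphism onto its image with $\|D\phi_F\|_{C^\beta}\le C_\#$ and $\|D\phi_F^{-1}\|_{C^\beta}\le C_\#$. Moreover, $\phi_F(B(m,C_0))$ contains $B(m,C_\#^{-1}C_0)$.
   Context: $\mathbb{R}^d=\mathbb{R}^{d_u}\times\mathbb{R}^{d_s}$, $d=d_u+d_s$, $1\le d_s\le d-1$, points $z=(x,y)$. $B(x,r)$, $B(y,r)$ are closed Euclidean balls in $\mathbb{R}^{d_u}$, $\mathbb{R}^{d_s}$, and $B(z,r)=B(x,r)\times B(y,r)$. A cone of dimension $d'$ is a closed subset of $\mathbb{R}^d$ with nonempty interior, invariant under scalar multiplication, whose maximal contained linear subspace has dimension $d'$; it is transverse to a subspace $E$ if $E$ contains a $(d-d')$-dimensional subspace meeting the cone only at $0$. $\mathcal{F}(m,\mathcal{C}^s,C_0,C_1)$, for $m=(x_m,y_m)$: the set of maps $\phi_F:B(m,C_0)\to\mathbb{R}^d$, $\phi_F(x,y)=(F(x,y),y)$, where $F:B(m,C_0)\to\mathbb{R}^{d_u}$ is $C^1$, $(\partial_yF(z)w,w)\in\mathcal{C}^s$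 for all $w\in\mathbb{R}^{d_s}$ and $z\in B(m,C_0)$, $F(x,y_m)=x$ for all $x\in B(x_m,C_0)$, and for all $(x,y),(x',y')\in B(m,C_0)$: $|DF(x,y)-DF(x,y')|\le|y-y'|^\alpha/C_1$, $|DF(x,y)-DF(x',y)|\le|x-x'|^\beta/C_1$, and $|DF(x,y)-DF(x,y')-DF(x',y)+DF(x',y')|\le|x-x'|^\beta|y-y'|^{\alpha-\beta}/C_1$. The $C^\beta$ norm of a matrix-valued function is the sum of its sup norm and its $\beta$-Hölder constant. *)

theory Defs
  imports "HOL-Analysis.Analysis"
begin

text \<open>Points of R^d = R^{d_u} x R^{d_s} are pairs (x,y) :: 'u \<times> 's of Euclidean spaces.
  B(z,r) = B(x,r) \<times> B(y,r) with closed Euclidean balls.\<close>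

definition pbox :: "'u::euclidean_space \<times> 's::euclidean_space \<Rightarrow> real \<Rightarrow> ('u \<times> 's) set" where
  "pbox z r = cball (fst z) r \<times> cball (snd z) r"

definition cone_of_dim :: "('a::euclidean_space) set \<Rightarrow> nat \<Rightarrow> bool" where
  "cone_of_dim C d' \<longleftrightarrow> closed C \<and> interior C \<noteq> {} \<and>
     (\<forall>t::real. \<forall>v\<in>C. t *\<^sub>R v \<in> C) \<and>
     (\<exists>V. subspace V \<and> V \<subseteq> C \<and> dim V = d') \<and>
     (\<forall>V. subspace V \<and> V \<subseteq> C \<longrightarrow> dim V \<le> d')"

definition cone_transverse :: "('a::euclidean_space) set \<Rightarrow> nat \<Rightarrow> 'a set \<Rightarrow> bool" where
  "cone_transverse C d' E \<longleftrightarrow>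
     (\<exists>W. subspace W \<and> W \<subseteq> E \<and> dim W = DIM('a) - d' \<and> W \<inter> C = {0})"

text \<open>The class F(m, C^s, C0, C1) (depending on the fixed exponents alpha, beta),
  described through the function F; DF z is the derivative of F at z.\<close>

definition F_class ::
  "real \<Rightarrow> real \<Rightarrow> 'u::euclidean_space \<times> 's::euclidean_space \<Rightarrow> ('u \<times> 's) set
     \<Rightarrow> real \<Rightarrow> real \<Rightarrow> ('u \<times> 's \<Rightarrow> 'u) set" where
  "F_class \<alpha> \<beta> m Cs C0 C1 = {F. \<exists>DF :: 'u \<times> 's \<Rightarrow> ('u \<times> 's) \<Rightarrow>\<^sub>L 'u.
     (\<forall>z\<in>pbox m C0. (F has_derivative blinfun_apply (DF z)) (at z within pbox m C0)) \<and>
     continuous_on (pbox m C0) DF \<and>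
     (\<forall>z\<in>pbox m C0. \<forall>w::'s. (DF z (0, w), w) \<in> Cs) \<and>
     (\<forall>x\<in>cball (fst m) C0. F (x, snd m) = x) \<and>
     (\<forall>x y x' y'. (x, y) \<in> pbox m C0 \<longrightarrow> (x', y') \<in> pbox m C0 \<longrightarrow>
        norm (DF (x, y) - DF (x, y')) \<le> dist y y' powr \<alpha> / C1 \<and>
        norm (DF (x, y) - DF (x', y)) \<le> dist x x' powr \<beta> / C1 \<and>
        norm (DF (x, y) - DF (x, y') - DF (x', y) + DF (x', y'))
           \<le> dist x x' powr \<beta> * dist y y' powr (\<alpha> - \<beta>) / C1)}"

definition phi_of :: "('u \<times> 's \<Rightarrow> 'u) \<Rightarrow> 'u \<times> 's \<Rightarrow> 'u \<times> 's" where
  "phi_of F z = (F z, snd z)"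

text \<open>C^beta norm of a (linear-map valued) function on S: sup norm plus beta-Hoelder
  constant (computed in [0,\<infinity>], so that an unbounded quantity gives \<infinity>).\<close>

definition holder_norm :: "real \<Rightarrow> 'a::metric_space set \<Rightarrow> ('a \<Rightarrow> 'b::real_normed_vector) \<Rightarrow> ennreal" where
  "holder_norm \<beta> S g =
     (SUP z\<in>S. ennreal (norm (g z))) +
     (SUP p\<in>{(z, z'). z \<in> S \<and> z' \<in> S \<and> z \<noteq> z'}.
        ennreal (norm (g (fst p) - g (snd p)) / dist (fst p) (snd p) powr \<beta>))"

end

theory Submission imports Defs begin

lemma cone_bound_aux:
  fixes Cs :: "('u::euclidean_space \<times> 's::euclidean_space) set"
  assumes cl: "closed Cs" and sc: "\<And>t v. v \<in> Cs \<Longrightarrow> t *\<^sub>R v \<in> Cs"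
    and tr: "\<And>a. (a, 0) \<in> Cs \<Longrightarrow> a = 0"
  shows "\<exists>K\<ge>0. \<forall>a b. (a, b) \<in> Cs \<longrightarrow> norm a \<le> K * norm b"
proof (cases "Cs \<inter> sphere 0 1 = {}")
  case True
  have "norm a \<le> 0 * norm b" if "(a,b) \<in> Cs" for a b
  proof (rule ccontr)
    assume "\<not> ?thesis"
    then have ne: "(a,b) \<noteq> 0" by (auto simp: zero_prod_def)
    have "norm ((1 / norm (a,b)) *\<^sub>R (a,b)) = 1" using ne by (simp del: scaleR_Pair)
    then have "(1 / norm (a,b)) *\<^sub>R (a,b) \<in> Cs \<inter> sphere 0 1" using sc[OF that, of "1 / norm (a,b)"] by (simp del: scaleR_Pair)
    then show False using True by auto
  qed
  then show ?thesis by blast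
next
  case False
  have cpt: "compact (Cs \<inter> sphere 0 1)" using cl by (simp add: compact_Int_closed closed_Int_compact)
  obtain p where p: "p \<in> Cs \<inter> sphere 0 1" and pmin: "\<forall>q\<in>Cs \<inter> sphere 0 1. norm (snd p) \<le> norm (snd q)"
  proof -
    have "continuous_on (Cs \<inter> sphere 0 1) (\<lambda>q. norm (snd q))" by (intro continuous_intros)
    from continuous_attains_inf[OF cpt False this] show ?thesis using that by blast
  qed
  have "snd p \<noteq> 0"
  proof
    assume "snd p = 0"
    then have "(fst p, 0) \<in> Cs" using p by (metis IntD1 prod.collapse)
    then have "fst p = 0" using tr by auto
    with \<open>snd p = 0\<close> have "p = 0" by (simp add: prod_eq_iff)
    with p show False by simp
  qed
  define \<delta> where "\<delta> = norm (snd p)"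
  have dpos: "\<delta> > 0" using \<open>snd p \<noteq> 0\<close> by (simp add: \<delta>_def)
  have "norm a \<le> (1/\<delta>) * norm b" if "(a,b) \<in> Cs" for a b
  proof (cases "(a,b) = 0")
    case True then show ?thesis by (simp add: zero_prod_def)
  next
    case False
    define n where "n = norm (a,b)"
    have npos: "n > 0" using False by (simp add: n_def)
    have "norm ((1 / n) *\<^sub>R (a,b)) = 1" using npos by (simp del: scaleR_Pair add: n_def)
    then have "(1 / n) *\<^sub>R (a,b) \<in> Cs \<inter> sphere 0 1" using sc[OF that, of "1/n"] False by (simp del: scaleR_Pair)
    then have "\<delta> \<le> norm (snd ((1 / n) *\<^sub>R (a,b)))" using pmin unfolding \<delta>_def by blast
    then have "\<delta> \<le> norm ((1/n) *\<^sub>R b)" by simp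
    then have "\<delta> * n \<le> norm b" using npos by (simp add: field_simps)
    moreover have "norm a \<le> n" by (simp add: n_def norm_fst_le[of a b, simplified])
    ultimately have "\<delta> * norm a \<le> norm b"
      using mult_left_mono[of "norm a" n \<delta>] dpos by linarith
    then show ?thesis using dpos by (simp add: field_simps)
  qed
  then show ?thesis using dpos by (intro exI[of _ "1/\<delta>"]) auto
qed

lemma snd_zero_dim: "dim {z :: 'u::euclidean_space \<times> 's::euclidean_space. snd z = 0} = DIM('u)"
proof -
  have eq: "{z :: 'u \<times> 's. snd z = 0} = range (\<lambda>x. (x, 0))"
  proof (intro set_eqI iffI)
    fix z :: "'u \<times> 's" assume "z \<in> {z. snd z = 0}"
    then have "z = (fst z, 0)" by (simp add: prod_eq_iff)
    then show "z \<in> range (\<lambda>x. (x, 0))" by (metis rangeI)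
  next
    fix z :: "'u \<times> 's" assume "z \<in> range (\<lambda>x. (x, 0))"
    then show "z \<in> {z. snd z = 0}" by auto
  qed
  have "bounded_linear (\<lambda>x::'u. (x, 0::'s))"
    by (rule bounded_linear_Pair[OF bounded_linear_ident bounded_linear_zero])
  then have "linear (\<lambda>x::'u. (x, 0::'s))" by (rule bounded_linear.linear)
  moreover have "inj_on (\<lambda>x::'u. (x, 0::'s)) (span UNIV)" by (rule inj_onI) simp
  ultimately have "dim ((\<lambda>x::'u. (x, 0::'s)) ` UNIV) = dim (UNIV :: 'u set)" by (rule dim_image_eq)
  then show ?thesis using eq by simp
qed

lemma transverse_aux:
  fixes Cs :: "('u::euclidean_space \<times> 's::euclidean_space) set"
  assumes "cone_transverse Cs DIM('s) {z. snd z = 0}"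
  shows "\<And>a. (a, 0) \<in> Cs \<Longrightarrow> a = 0"
proof -
  obtain W where W: "subspace W" "W \<subseteq> {z. snd z = 0}" "dim W = DIM('u \<times> 's) - DIM('s)" "W \<inter> Cs = {0}"
    using assms unfolding cone_transverse_def by blast
  have sub: "subspace {z :: 'u \<times> 's. snd z = 0}" unfolding subspace_def by simp
  have d: "dim {z :: 'u \<times> 's. snd z = 0} \<le> dim W"
    using W(3) snd_zero_dim[where 'u='u and 's='s] by simp
  have "W = {z. snd z = 0}"
    by (rule subspace_dim_equal[OF W(1) sub W(2) d])
  fix a assume "(a, 0) \<in> Cs"
  moreover have "(a, 0) \<in> W" using \<open>W = _\<close> by simp
  ultimately have "(a, 0) = (0 :: 'u \<times> 's)" using W(4) by blast
  then show "a = 0" by (simp add: zero_prod_def)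
qed

lemma holder_le:
  fixes g :: "'a::metric_space \<Rightarrow> 'b::real_normed_vector"
  assumes M: "\<And>z. z \<in> T \<Longrightarrow> norm (g z) \<le> M" and M0: "0 \<le> M" and H0: "0 \<le> H"
    and H: "\<And>z z'. z \<in> T \<Longrightarrow> z' \<in> T \<Longrightarrow> z \<noteq> z' \<Longrightarrow> norm (g z - g z') \<le> H * dist z z' powr \<beta>"
  shows "holder_norm \<beta> T g \<le> ennreal (M + H)"
proof -
  have a: "(SUP z\<in>T. ennreal (norm (g z))) \<le> ennreal M"
    by (rule SUP_least) (rule ennreal_leI[OF M])
  have b: "(SUP p\<in>{(z, z'). z \<in> T \<and> z' \<in> T \<and> z \<noteq> z'}.
        ennreal (norm (g (fst p) - g (snd p)) / dist (fst p) (snd p) powr \<beta>)) \<le> ennreal H"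
  proof (rule SUP_least)
    fix p assume "p \<in> {(z, z'). z \<in> T \<and> z' \<in> T \<and> z \<noteq> z'}"
    then obtain z z' where p: "p = (z, z')" "z \<in> T" "z' \<in> T" "z \<noteq> z'" by blast
    have pos: "dist z z' powr \<beta> > 0" using p(4) by simp
    have "norm (g z - g z') / dist z z' powr \<beta> \<le> H"
      using H[OF p(2,3,4)] pos by (simp add: divide_le_eq)
    then show "ennreal (norm (g (fst p) - g (snd p)) / dist (fst p) (snd p) powr \<beta>) \<le> ennreal H"
      using p(1) by (simp add: ennreal_leI)
  qed
  have "holder_norm \<beta> T g \<le> ennreal M + ennreal H"
    unfolding holder_norm_def by (rule add_mono[OF a b])
  also have "\<dots> = ennreal (M + H)" using M0 H0 by simp
  finally show ?thesis .
qed

lemma cont_transfer: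
  fixes f :: "'a::metric_space \<Rightarrow> 'b::real_normed_vector" and g :: "'a \<Rightarrow> 'c::real_normed_vector"
  assumes f: "continuous_on T f" and c: "0 \<le> c"
    and b: "\<And>a b. a \<in> T \<Longrightarrow> b \<in> T \<Longrightarrow> norm (g a - g b) \<le> c * norm (f a - f b)"
  shows "continuous_on T g"
  unfolding continuous_on_iff
proof (intro ballI allI impI)
  fix x e assume x: "x \<in> T" and e: "(0::real) < e"
  have ce: "e / (c + 1) > 0" using c e by simp
  obtain d where d: "d > 0" "\<forall>x'\<in>T. dist x' x < d \<longrightarrow> dist (f x') (f x) < e / (c + 1)"
    using f x ce unfolding continuous_on_iff by blast
  show "\<exists>d>0. \<forall>x'\<in>T. dist x' x < d \<longrightarrow> dist (g x') (g x) < e"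
  proof (intro exI conjI ballI impI)
    show "d > 0" by fact
    fix x' assume x': "x' \<in> T" "dist x' x < d"
    have "dist (g x') (g x) \<le> c * dist (f x') (f x)" using b[OF x'(1) x] by (simp add: dist_norm)
    also have "\<dots> \<le> (c + 1) * dist (f x') (f x)" by (simp add: distrib_right)
    also have "\<dots> < (c + 1) * (e / (c + 1))" using d x' c by (intro mult_strict_left_mono) auto
    also have "\<dots> = e" using c by simp
    finally show "dist (g x') (g x) < e" .
  qed
qed

locale fsetup =
  fixes \<alpha> \<beta> C0 C1 K :: real and m :: "'u::euclidean_space \<times> 's::euclidean_space"
    and F :: "'u \<times> 's \<Rightarrow> 'u" and DF :: "'u \<times> 's \<Rightarrow> ('u \<times> 's) \<Rightarrow>\<^sub>L 'u"
  assumes a0: "0 < \<alpha>" and a1: "\<alpha> \<le> 1" and b0: "0 < \<beta>" and ba: "\<beta> \<le> \<alpha>"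
    and C0: "1 < C0" and C01: "C0 < C1 / 2" and K0: "0 \<le> K"
    and der: "\<And>z. z \<in> pbox m C0 \<Longrightarrow> (F has_derivative blinfun_apply (DF z)) (at z within pbox m C0)"
    and cont: "continuous_on (pbox m C0) DF"
    and ybd: "\<And>z k. z \<in> pbox m C0 \<Longrightarrow> norm (DF z (0, k)) \<le> K * norm k"
    and base: "\<And>x. x \<in> cball (fst m) C0 \<Longrightarrow> F (x, snd m) = x"
    and holy: "\<And>x y y'. (x, y) \<in> pbox m C0 \<Longrightarrow> (x, y') \<in> pbox m C0 \<Longrightarrow>
        norm (DF (x, y) - DF (x, y')) \<le> dist y y' powr \<alpha> / C1"
    and holx: "\<And>x x' y. (x, y) \<in> pbox m C0 \<Longrightarrow> (x', y) \<in> pbox m C0 \<Longrightarrow>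
        norm (DF (x, y) - DF (x', y)) \<le> dist x x' powr \<beta> / C1"
begin

abbreviation "S \<equiv> pbox m C0"
abbreviation "xm \<equiv> fst m"
abbreviation "ym \<equiv> snd m"

lemma memS: "(x, y) \<in> S \<longleftrightarrow> x \<in> cball xm C0 \<and> y \<in> cball ym C0"
  by (simp add: pbox_def)

lemma id_base:
  assumes x: "x \<in> cball xm C0"
  shows "DF (x, ym) (h, 0) = h"
proof -
  have inner: "DF (x, ym) (h, 0) = h" if xb: "x \<in> ball xm C0" for x h
  proof -
    have sub: "ball xm C0 \<times> ball ym C0 \<subseteq> S" unfolding pbox_def by (intro Sigma_mono ball_subset_cball)
    have op: "open (ball xm C0 \<times> ball ym C0)" by (intro open_Times open_ball)
    have mem: "(x, ym) \<in> ball xm C0 \<times> ball ym C0" using xb C0 by simp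
    have "ball xm C0 \<times> ball ym C0 \<subseteq> interior S" by (rule interior_maximal[OF sub op])
    with mem have "(x, ym) \<in> interior S" by (rule subsetD[rotated])
    then have eq: "at (x, ym) within S = at (x, ym)" by (rule at_within_interior)
    have "(x, ym) \<in> S" using sub mem by (rule subsetD)
    from der[OF this] have d1: "(F has_derivative blinfun_apply (DF (x, ym))) (at (x, ym))"
      unfolding eq .
    have d2: "((\<lambda>x. (x, ym)) has_derivative (\<lambda>h. (h, 0))) (at x)"
      by (rule has_derivative_Pair[OF has_derivative_ident has_derivative_const])
    have d3: "((\<lambda>x. F (x, ym)) has_derivative (\<lambda>h. DF (x, ym) (h, 0))) (at x)"
      by (rule has_derivative_compose[OF d2 d1])
    have d4: "((\<lambda>x. x) has_derivative (\<lambda>h. DF (x, ym) (h, 0))) (at x)"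
    proof (rule has_derivative_transform_within_open[OF d3 open_ball xb])
      fix y assume "y \<in> ball xm C0"
      then have "y \<in> cball xm C0" by simp
      then show "F (y, ym) = y" by (rule base)
    qed
    have "(\<lambda>h. DF (x, ym) (h, 0)) = (\<lambda>h. h)"
      by (rule has_derivative_unique[OF d4]) (rule has_derivative_ident)
    from fun_cong[OF this, of h] show ?thesis by simp
  qed
  have "continuous_on (cball xm C0) (\<lambda>x. DF (x, ym) (h, 0) - h)"
  proof -
    have "continuous_on (cball xm C0) (\<lambda>x. (x, ym))"
      by (rule continuous_on_Pair[OF continuous_on_id continuous_on_const])
    moreover have "(\<lambda>x. (x, ym)) ` cball xm C0 \<subseteq> S" using C0 by (auto simp: memS)
    ultimately have "continuous_on (cball xm C0) (\<lambda>x. DF (x, ym))"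
      by (rule continuous_on_compose2[OF cont])
    then have "continuous_on (cball xm C0) (\<lambda>x. DF (x, ym) (h, 0))"
      by (rule bounded_bilinear.continuous_on[OF bounded_bilinear_blinfun_apply _ continuous_on_const])
    then show ?thesis by (rule continuous_on_diff[OF _ continuous_on_const])
  qed
  moreover have cl: "closure (ball xm C0) = cball xm C0" using C0 by simp
  ultimately have c2: "continuous_on (closure (ball xm C0)) (\<lambda>x. DF (x, ym) (h, 0) - h)" by simp
  have "DF (x, ym) (h, 0) - h = 0"
  proof (rule continuous_constant_on_closure[OF c2])
    fix y assume "y \<in> ball xm C0" then show "DF (y, ym) (h, 0) - h = 0" using inner by simp
  next
    show "x \<in> closure (ball xm C0)" using x cl by simp
  qed
  then show ?thesis by simp
qed

lemma C1pos: "C1 > 2" using C0 C01 by linarith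

lemma near_id:
  assumes "(x, y) \<in> S"
  shows "norm (DF (x, y) - DF (x, ym)) \<le> 1/2"
proof -
  have xy: "x \<in> cball xm C0" "y \<in> cball ym C0" using assms by (auto simp: memS)
  have "(x, ym) \<in> S" using xy C0 by (simp add: memS)
  then have "norm (DF (x, y) - DF (x, ym)) \<le> dist y ym powr \<alpha> / C1" using holy assms by blast
  also have "dist y ym powr \<alpha> \<le> C0 powr \<alpha>"
    using xy a0 by (intro powr_mono2) (auto simp: dist_commute)
  also have "C0 powr \<alpha> \<le> C0 powr 1" using a1 C0 by (intro powr_mono) auto
  also have "C0 powr 1 / C1 \<le> 1/2" using C0 C01 C1pos by (simp add: field_simps)
  finally show ?thesis using C1pos by (simp add: divide_right_mono)
qed

lemma xlip:
  assumes y: "y \<in> cball ym C0" and x: "x \<in> cball xm C0" and x': "x' \<in> cball xm C0"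
  shows "norm ((F (x, y) - x) - (F (x', y) - x')) \<le> 1/2 * norm (x - x')"
proof -
  have d: "((\<lambda>x. F (x, y) - x) has_derivative (\<lambda>h. DF (x, y) (h, 0) - h)) (at x within cball xm C0)"
    if "x \<in> cball xm C0" for x
  proof -
    have "((\<lambda>x. (x, y)) has_derivative (\<lambda>h. (h, 0))) (at x within cball xm C0)"
      by (rule has_derivative_Pair[OF has_derivative_ident has_derivative_const])
    moreover have "(\<lambda>x. (x, y)) ` cball xm C0 \<subseteq> S" using y by (auto simp: memS)
    ultimately have "((\<lambda>x. F (x, y)) has_derivative (\<lambda>h. DF (x, y) (h, 0))) (at x within cball xm C0)"
      using has_derivative_in_compose2[where t=S and g'="\<lambda>z. blinfun_apply (DF z)" and g=F, OF der, of "\<lambda>x. (x, y)" "cball xm C0" x] that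
      by blast
    then show ?thesis by (rule has_derivative_diff[OF _ has_derivative_ident])
  qed
  have b: "onorm (\<lambda>h. DF (x, y) (h, 0) - h) \<le> 1/2" if "x \<in> cball xm C0" for x
  proof (rule onorm_le)
    fix h
    have "DF (x, y) (h, 0) - h = (DF (x, y) - DF (x, ym)) (h, 0)"
      using id_base[OF that] by (simp add: blinfun.diff_left)
    also have "norm \<dots> \<le> norm (DF (x, y) - DF (x, ym)) * norm (h, 0::'s)" by (rule norm_blinfun)
    also have "\<dots> \<le> 1/2 * norm h"
    proof -
      have "norm (DF (x, y) - DF (x, ym)) \<le> 1/2" using near_id[of x y] that y by (simp add: memS)
      from mult_right_mono[OF this norm_ge_zero[of h]] show ?thesis by simp
    qed
    finally show "norm (DF (x, y) (h, 0) - h) \<le> 1/2 * norm h" .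
  qed
  show ?thesis by (rule differentiable_bound[OF convex_cball d b x x'])
qed

lemma ylip:
  assumes x: "x \<in> cball xm C0" and y: "y \<in> cball ym C0" and y': "y' \<in> cball ym C0"
  shows "norm (F (x, y) - F (x, y')) \<le> K * norm (y - y')"
proof -
  have d: "((\<lambda>y. F (x, y)) has_derivative (\<lambda>k. DF (x, y) (0, k))) (at y within cball ym C0)"
    if "y \<in> cball ym C0" for y
  proof -
    have "((\<lambda>y. (x, y)) has_derivative (\<lambda>k. (0, k))) (at y within cball ym C0)"
      by (rule has_derivative_Pair[OF has_derivative_const has_derivative_ident])
    moreover have "(\<lambda>y. (x, y)) ` cball ym C0 \<subseteq> S" using x by (auto simp: memS)
    ultimately show ?thesis
      using has_derivative_in_compose2[where t=S and g'="\<lambda>z. blinfun_apply (DF z)" and g=F, OF der, of "\<lambda>y. (x, y)" "cball ym C0" y] that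
      by blast
  qed
  have b: "onorm (\<lambda>k. DF (x, y) (0, k)) \<le> K" if "y \<in> cball ym C0" for y
    by (rule onorm_le) (use ybd that x in \<open>auto simp: memS\<close>)
  show ?thesis by (rule differentiable_bound[OF convex_cball d b y y'])
qed


definition Dphi :: "'u \<times> 's \<Rightarrow> ('u \<times> 's) \<Rightarrow>\<^sub>L ('u \<times> 's)" where
  "Dphi z = Blinfun (\<lambda>v. (DF z v, snd v))"

lemma Dphi_apply: "blinfun_apply (Dphi z) = (\<lambda>v. (DF z v, snd v))"
proof -
  have "bounded_linear (\<lambda>v. (DF z v, snd v))"
    by (rule bounded_linear_Pair[OF blinfun.bounded_linear_right bounded_linear_snd])
  then show ?thesis unfolding Dphi_def by (rule bounded_linear_Blinfun_apply)
qed

lemma phi_der: "z \<in> S \<Longrightarrow> (phi_of F has_derivative blinfun_apply (Dphi z)) (at z within S)"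
  unfolding Dphi_apply phi_of_def[abs_def]
  by (rule has_derivative_Pair[OF der has_derivative_snd[OF has_derivative_ident]])

lemma Dphi_diff: "norm (Dphi z - Dphi z') \<le> norm (DF z - DF z')"
proof (rule norm_blinfun_bound)
  fix v
  have "blinfun_apply (Dphi z - Dphi z') v = ((DF z - DF z') v, 0)"
    by (simp add: blinfun.diff_left Dphi_apply)
  then show "norm (blinfun_apply (Dphi z - Dphi z') v) \<le> norm (DF z - DF z') * norm v"
    by (simp add: norm_blinfun)
qed simp

abbreviation "L \<equiv> 3 + 2 * K"

lemma DF_h0: assumes "z \<in> S" shows "norm (DF z (h, 0) - h) \<le> 1/2 * norm h"
proof -
  obtain x y where z: "z = (x, y)" by fastforce
  have x: "x \<in> cball xm C0" using assms z by (simp add: memS)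
  have "DF z (h, 0) - h = (DF (x, y) - DF (x, ym)) (h, 0)"
    using id_base[OF x] z by (simp add: blinfun.diff_left)
  also have "norm \<dots> \<le> norm (DF (x, y) - DF (x, ym)) * norm (h, 0::'s)" by (rule norm_blinfun)
  also have "\<dots> \<le> 1/2 * norm h"
  proof -
    have "norm (DF (x, y) - DF (x, ym)) \<le> 1/2" using near_id assms z by simp
    from mult_right_mono[OF this norm_ge_zero[of h]] show ?thesis by simp
  qed
  finally show ?thesis .
qed

lemma DF_split: "DF z (h, k) = DF z (h, 0) + DF z (0, k)"
proof -
  have "(h, k) = (h, 0) + (0, k)" by simp
  then show ?thesis by (metis blinfun.add_right)
qed

lemma Dphi_norm: assumes "z \<in> S" shows "norm (Dphi z) \<le> L"
proof (rule norm_blinfun_bound)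
  fix v :: "'u \<times> 's"
  obtain h k where v: "v = (h, k)" by fastforce
  have nh: "norm h \<le> norm v" and nk: "norm k \<le> norm v" using v norm_fst_le norm_snd_le by fastforce+
  have "norm (DF z (h, 0)) \<le> 3/2 * norm h"
    using DF_h0[OF assms, of h] norm_triangle_ineq2[of "DF z (h, 0)" h] by linarith
  moreover have "norm (DF z (0, k)) \<le> K * norm k" using ybd assms by blast
  ultimately have "norm (DF z v) \<le> 3/2 * norm h + K * norm k"
    using DF_split[of z h k] v norm_triangle_ineq[of "DF z (h, 0)" "DF z (0, k)"] by simp
  also have "\<dots> \<le> (3/2 + K) * norm v" using nh nk K0
    by (simp add: distrib_right add_mono mult_left_mono)
  finally have "norm (DF z v) \<le> (3/2 + K) * norm v" .
  then have "norm (Dphi z v) \<le> (3/2 + K) * norm v + norm v"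
    using norm_Pair_le[of "DF z v" "snd v"] nk v by (simp add: Dphi_apply)
  also have "\<dots> \<le> L * norm v" using K0 by (simp add: algebra_simps)
  finally show "norm (Dphi z v) \<le> L * norm v" .
qed (use K0 in simp)

lemma Dphi_lower: assumes "z \<in> S" shows "norm v \<le> L * norm (Dphi z v)"
proof -
  obtain h k where v: "v = (h, k)" by fastforce
  define n where "n = norm (Dphi z v)"
  have e: "Dphi z v = (DF z v, k)" using v by (simp add: Dphi_apply)
  have n1: "norm (DF z v) \<le> n" and n2: "norm k \<le> n"
    unfolding n_def e by (rule norm_fst_le, rule norm_snd_le)
  have "norm (DF z (h, 0)) \<le> n + K * norm k"
    using DF_split[of z h k] v n1 ybd[OF assms, of k] norm_triangle_ineq4[of "DF z v" "DF z (0, k)"]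
    by (simp add: algebra_simps)
  moreover have "1/2 * norm h \<le> norm (DF z (h, 0))"
    using DF_h0[OF assms, of h] norm_triangle_ineq3[of "DF z (h, 0)" h] by (simp add: norm_minus_commute)
  ultimately have "norm h \<le> 2 * n + 2 * K * norm k" by linarith
  also have "\<dots> \<le> 2 * n + 2 * K * n" using n2 K0 by (simp add: mult_left_mono)
  finally have "norm v \<le> (2 * n + 2 * K * n) + n" using norm_Pair_le[of h k] v n2 by simp
  then show ?thesis by (simp add: n_def algebra_simps)
qed

lemma DF_hol: assumes z: "z \<in> S" and z': "z' \<in> S" shows "norm (DF z - DF z') \<le> 2 * dist z z' powr \<beta>"
proof -
  obtain x y where zz: "z = (x, y)" by fastforce
  obtain x' y' where zz': "z' = (x', y')" by fastforce
  have m: "(x, y) \<in> S" "(x, y') \<in> S" "(x', y') \<in> S" using z z' zz zz' by (auto simp: memS)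
  have dy: "dist y y' \<le> dist z z'" and dx: "dist x x' \<le> dist z z'"
    using zz zz' by (auto simp: dist_Pair_Pair intro: real_sqrt_sum_squares_ge1 real_sqrt_sum_squares_ge2)
  have dyC: "dist y y' \<le> 2 * C0"
  proof -
    have "dist y y' \<le> dist y ym + dist ym y'" by (rule dist_triangle)
    then show ?thesis using m by (auto simp: memS dist_commute)
  qed
  have "norm (DF z - DF z') \<le> norm (DF (x, y) - DF (x, y')) + norm (DF (x, y') - DF (x', y'))"
    using zz zz' norm_triangle_ineq[of "DF (x, y) - DF (x, y')" "DF (x, y') - DF (x', y')"] by simp
  also have "\<dots> \<le> dist y y' powr \<alpha> / C1 + dist x x' powr \<beta> / C1"
    using holy[OF m(1,2)] holx[OF m(2,3)] by (rule add_mono)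
  also have "dist y y' powr \<alpha> / C1 \<le> dist z z' powr \<beta>"
  proof (cases "y = y'")
    case True then show ?thesis by simp
  next
    case False
    then have pos: "dist y y' > 0" by simp
    have e: "dist y y' powr \<alpha> = dist y y' powr \<beta> * dist y y' powr (\<alpha> - \<beta>)"
      by (simp add: powr_add[symmetric])
    have p1: "dist y y' powr \<beta> \<le> dist z z' powr \<beta>"
      using dy b0 by (intro powr_mono2) auto
    have p2: "dist y y' powr (\<alpha> - \<beta>) \<le> (2 * C0) powr (\<alpha> - \<beta>)"
      using dyC ba by (intro powr_mono2) auto
    have p3: "(2 * C0) powr (\<alpha> - \<beta>) \<le> (2 * C0) powr 1"
      by (rule powr_mono) (use ba a1 b0 C0 in auto)
    have "dist y y' powr \<alpha> \<le> dist z z' powr \<beta> * (2 * C0)"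
      unfolding e using p1 p2 p3 C0 by (intro mult_mono) auto
    then have "dist y y' powr \<alpha> / C1 \<le> dist z z' powr \<beta> * (2 * C0) / C1"
      using C1pos by (intro divide_right_mono) auto
    also have "\<dots> = dist z z' powr \<beta> * (2 * C0 / C1)" by simp
    also have "\<dots> \<le> dist z z' powr \<beta> * 1"
      using C01 C1pos by (intro mult_left_mono) (auto simp: field_simps)
    finally show ?thesis by simp
  qed
  also have "dist x x' powr \<beta> / C1 \<le> dist z z' powr \<beta>"
  proof -
    have "dist x x' powr \<beta> \<le> dist z z' powr \<beta>" using dx b0 by (intro powr_mono2) auto
    moreover have "dist z z' powr \<beta> / C1 \<le> dist z z' powr \<beta>"
      using C1pos by (simp add: divide_le_eq mult_le_cancel_left1)
    ultimately show ?thesis using C1pos by (smt (verit) divide_right_mono)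
  qed
  finally show ?thesis by simp
qed

lemma phi_lower:
  assumes z: "z \<in> S" and z': "z' \<in> S"
  shows "norm (z - z') \<le> L * norm (phi_of F z - phi_of F z')"
proof -
  obtain x y where zz: "z = (x, y)" by (cases z)
  obtain x' y' where zz': "z' = (x', y')" by (cases z')
  have m: "x \<in> cball xm C0" "y \<in> cball ym C0" "x' \<in> cball xm C0" "y' \<in> cball ym C0"
    using z z' zz zz' by (auto simp: memS)
  define n where "n = norm (phi_of F z - phi_of F z')"
  have e: "phi_of F z - phi_of F z' = (F (x, y) - F (x', y'), y - y')"
    using zz zz' by (simp add: phi_of_def)
  have n1: "norm (F (x, y) - F (x', y')) \<le> n" and n2: "norm (y - y') \<le> n"
    unfolding n_def e by (rule norm_fst_le, rule norm_snd_le)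
  have l1: "norm ((F (x, y) - x) - (F (x', y) - x')) \<le> 1/2 * norm (x - x')" by (rule xlip[OF m(2,1,3)])
  have l2: "norm (F (x', y) - F (x', y')) \<le> K * norm (y - y')" by (rule ylip[OF m(3,2,4)])
  have t1: "norm (x - x') \<le> norm (F (x, y) - F (x', y)) + norm ((F (x, y) - x) - (F (x', y) - x'))"
    using norm_triangle_ineq4[of "F (x, y) - F (x', y)" "(F (x, y) - x) - (F (x', y) - x')"]
    by (simp add: algebra_simps)
  have t2: "norm (F (x, y) - F (x', y)) \<le> norm (F (x, y) - F (x', y')) + norm (F (x', y) - F (x', y'))"
    using norm_triangle_ineq4[of "F (x, y) - F (x', y')" "F (x', y) - F (x', y')"]
    by (simp add: algebra_simps)
  have "K * norm (y - y') \<le> K * n" using n2 K0 by (rule mult_left_mono)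
  then have "norm (x - x') \<le> 2 * n + 2 * K * n" using t1 t2 l1 l2 n1 by linarith
  moreover have "norm (z - z') \<le> norm (x - x') + norm (y - y')"
    using zz zz' norm_Pair_le[of "x - x'" "y - y'"] by simp
  ultimately show ?thesis using n2 by (simp add: n_def algebra_simps)
qed

lemma surj_aux:
  assumes C: "1 + K \<le> C" and u: "u \<in> cball xm (C0 / C)" and v: "v \<in> cball ym (C0 / C)"
  shows "\<exists>x\<in>cball xm C0. F (x, v) = u"
proof -
  have Cpos: "C \<ge> 1" using C K0 by linarith
  have C0C: "C0 / C \<le> C0" using Cpos C0 by (simp add: divide_le_eq_1_pos mult_le_cancel_left1 field_simps)
  have vC: "v \<in> cball ym C0" using v C0C by simp
  define T where "T x = u - (F (x, v) - x)" for x
  have "\<exists>!x\<in>cball xm C0. T x = x"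
  proof (rule Banach_fix)
    show "complete (cball xm C0)" by (rule compact_imp_complete[OF compact_cball])
    show "cball xm C0 \<noteq> {}" using C0 by simp
    show "(0::real) \<le> 1/2" by simp
    show "(1::real)/2 < 1" by simp
    show "T ` cball xm C0 \<subseteq> cball xm C0"
    proof
      fix w assume "w \<in> T ` cball xm C0"
      then obtain x where x: "x \<in> cball xm C0" and w: "w = T x" by blast
      have "norm (F (x, v) - x) = norm (F (x, v) - F (x, ym))" using base[OF x] by simp
      also have "\<dots> \<le> K * norm (v - ym)" by (rule ylip[OF x vC]) (use C0 in simp)
      also have "\<dots> \<le> K * (C0 / C)" using v K0 by (intro mult_left_mono) (auto simp: dist_norm norm_minus_commute)
      finally have a: "norm (F (x, v) - x) \<le> K * (C0 / C)" .
      have b: "norm (xm - u) \<le> C0 / C" using u by (simp add: dist_norm)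
      have "dist xm w = norm ((xm - u) + (F (x, v) - x))" by (simp add: w T_def dist_norm algebra_simps)
      also have "\<dots> \<le> C0 / C + K * (C0 / C)" using a b norm_triangle_ineq[of "xm - u" "F (x, v) - x"] by linarith
      also have "\<dots> = (1 + K) * C0 / C" by (simp add: add_divide_distrib ring_distribs)
      also have "\<dots> \<le> C0" using C C0 Cpos by (simp add: divide_le_eq mult_right_mono)
      finally show "w \<in> cball xm C0" by simp
    qed
    fix x y assume x: "x \<in> cball xm C0" and y: "y \<in> cball xm C0"
    have "dist (T x) (T y) = norm ((F (x, v) - x) - (F (y, v) - y))"
      by (simp add: T_def dist_norm algebra_simps norm_minus_commute)
    also have "\<dots> \<le> 1/2 * norm (x - y)" by (rule xlip[OF vC x y])
    finally show "dist (T x) (T y) \<le> 1/2 * dist x y" by (simp add: dist_norm)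
  qed
  then obtain x where x: "x \<in> cball xm C0" "T x = x" by blast
  then have "F (x, v) = u" by (simp add: T_def algebra_simps)
  with x show ?thesis by blast
qed

definition Dinv :: "'u \<times> 's \<Rightarrow> ('u \<times> 's) \<Rightarrow>\<^sub>L ('u \<times> 's)" where
  "Dinv z = Blinfun (inv (blinfun_apply (Dphi z)))"

lemma Dinv_props:
  assumes z: "z \<in> S"
  shows "\<And>v. Dinv z (Dphi z v) = v" and "\<And>v. Dphi z (Dinv z v) = v"
proof -
  have lin: "linear (blinfun_apply (Dphi z))" by (rule bounded_linear.linear[OF blinfun.bounded_linear_right])
  have inj: "inj (blinfun_apply (Dphi z))"
  proof (rule injI)
    fix a b assume "Dphi z a = Dphi z b"
    then have "Dphi z (a - b) = 0" by (simp add: blinfun.diff_right)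
    then have "norm (a - b) \<le> 0" using Dphi_lower[OF z, of "a - b"] by simp
    then show "a = b" by simp
  qed
  obtain g where g: "linear g" "\<And>x. g (Dphi z x) = x" "\<And>x. Dphi z (g x) = x"
    using linear_injective_isomorphism[OF lin inj] by auto
  have ig: "inv (blinfun_apply (Dphi z)) = g" by (rule inv_equality) (use g in auto)
  have "bounded_linear g" using g(1) by (simp add: linear_conv_bounded_linear)
  then have "blinfun_apply (Dinv z) = g" unfolding Dinv_def ig by (rule bounded_linear_Blinfun_apply)
  then show "\<And>v. Dinv z (Dphi z v) = v" and "\<And>v. Dphi z (Dinv z v) = v" using g by auto
qed

lemma Dinv_norm: assumes z: "z \<in> S" shows "norm (Dinv z) \<le> L"
proof (rule norm_blinfun_bound)
  fix v show "norm (Dinv z v) \<le> L * norm v" using Dphi_lower[OF z, of "Dinv z v"] Dinv_props(2)[OF z] by simp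
qed (use K0 in simp)

lemma Dinv_diff:
  assumes z: "z \<in> S" and z': "z' \<in> S"
  shows "norm (Dinv z - Dinv z') \<le> L * L * norm (Dphi z - Dphi z')"
proof (rule norm_blinfun_bound)
  show "0 \<le> L * L * norm (Dphi z - Dphi z')" using K0 by simp
  fix v
  define a where "a = Dinv z' v"
  have va: "v = Dphi z' a" using Dinv_props(2)[OF z'] by (simp add: a_def)
  have "(Dinv z - Dinv z') v = Dinv z v - a" by (simp add: blinfun.diff_left a_def)
  also have "\<dots> = Dinv z (Dphi z' a) - Dinv z (Dphi z a)"
    by (subst va) (simp only: Dinv_props(1)[OF z])
  also have "\<dots> = Dinv z ((Dphi z' - Dphi z) a)" by (simp add: blinfun.diff_right blinfun.diff_left)
  finally have e: "(Dinv z - Dinv z') v = Dinv z ((Dphi z' - Dphi z) a)" .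
  define N where "N = norm (Dphi z - Dphi z')"
  have N: "norm (Dphi z' - Dphi z) = N" by (simp add: N_def norm_minus_commute)
  have L0: "0 \<le> L" using K0 by simp
  have na: "norm a \<le> L * norm v"
  proof -
    have "norm a \<le> norm (Dinv z') * norm v" unfolding a_def by (rule norm_blinfun)
    also have "\<dots> \<le> L * norm v" by (rule mult_right_mono[OF Dinv_norm[OF z'] norm_ge_zero])
    finally show ?thesis .
  qed
  have "norm (Dinv z ((Dphi z' - Dphi z) a)) \<le> norm (Dinv z) * norm ((Dphi z' - Dphi z) a)" by (rule norm_blinfun)
  also have "\<dots> \<le> L * (N * norm a)"
    by (rule mult_mono[OF Dinv_norm[OF z] _ L0 norm_ge_zero]) (unfold N[symmetric], rule norm_blinfun)
  also have "\<dots> \<le> L * (N * (L * norm v))"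
    by (rule mult_left_mono[OF mult_left_mono[OF na] L0]) (simp add: N_def)
  also have "\<dots> = L * L * N * norm v" by (simp only: mult_ac)
  finally show "norm ((Dinv z - Dinv z') v) \<le> L * L * norm (Dphi z - Dphi z') * norm v"
    unfolding e N_def .
qed

lemma L1: "1 \<le> L" using K0 by simp

lemma inj_phi: "inj_on (phi_of F) S"
proof (rule inj_onI)
  fix z z' assume "z \<in> S" "z' \<in> S" "phi_of F z = phi_of F z'"
  then have "norm (z - z') \<le> 0" using phi_lower[of z z'] by simp
  then show "z = z'" by simp
qed

lemma main_local:
  shows "inj_on (phi_of F) S \<and>
        (\<exists>D\<phi> D\<psi> \<psi>.
           (\<forall>z\<in>S. (phi_of F has_derivative blinfun_apply (D\<phi> z)) (at z within S)) \<and>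
           continuous_on S D\<phi> \<and>
           (\<forall>z\<in>S. \<psi> (phi_of F z) = z) \<and>
           (\<forall>w\<in>phi_of F ` S.
              (\<psi> has_derivative blinfun_apply (D\<psi> w)) (at w within phi_of F ` S) \<and>
              D\<psi> w o\<^sub>L D\<phi> (\<psi> w) = id_blinfun \<and> D\<phi> (\<psi> w) o\<^sub>L D\<psi> w = id_blinfun) \<and>
           continuous_on (phi_of F ` S) D\<psi> \<and>
           holder_norm \<beta> S D\<phi> \<le> ennreal (L + 2 * L ^ 3) \<and>
           holder_norm \<beta> (phi_of F ` S) D\<psi> \<le> ennreal (L + 2 * L ^ 3)) \<and>
        pbox m (C0 / (L + 2 * L ^ 3)) \<subseteq> phi_of F ` S"
proof -
  define Cs where "Cs = L + 2 * L ^ 3"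
  have L0: "0 \<le> L" using K0 by simp
  have L3: "1 \<le> L ^ 3" using L1 by simp
  have CsL: "L + 2 \<le> Cs" and Cs1: "1 + K \<le> Cs" using L1 L3 K0 by (auto simp: Cs_def)
  define \<psi> where "\<psi> = inv_into S (phi_of F)"
  have inj: "inj_on (phi_of F) S" by (rule inj_phi)
  have \<psi>1: "\<psi> (phi_of F z) = z" if "z \<in> S" for z using inj that by (simp add: \<psi>_def)
  have \<psi>S: "\<psi> w \<in> S" if "w \<in> phi_of F ` S" for w using that by (simp add: \<psi>_def inv_into_into)
  have \<psi>2: "phi_of F (\<psi> w) = w" if "w \<in> phi_of F ` S" for w using that by (simp add: \<psi>_def f_inv_into_f)
  have cphi: "continuous_on S (phi_of F)"
    by (rule has_derivative_continuous_on) (rule phi_der)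
  have cpt: "compact S" unfolding pbox_def by (intro compact_Times compact_cball)
  have c\<psi>: "continuous_on (phi_of F ` S) \<psi>"
    by (rule continuous_on_inv[OF cphi cpt]) (use \<psi>1 in blast)
  have cDphi: "continuous_on S Dphi"
    by (rule cont_transfer[OF cont, of 1]) (use Dphi_diff in auto)
  have cDinv: "continuous_on S Dinv"
    by (rule cont_transfer[OF cDphi, of "L * L"]) (use Dinv_diff L0 in auto)
  have cD\<psi>: "continuous_on (phi_of F ` S) (\<lambda>w. Dinv (\<psi> w))"
    by (rule continuous_on_compose2[OF cDinv c\<psi>]) (use \<psi>S in blast)
  have der\<psi>: "(\<psi> has_derivative blinfun_apply (Dinv (\<psi> w))) (at w within phi_of F ` S)"
    if w: "w \<in> phi_of F ` S" for w
  proof -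
    have "(\<psi> has_derivative blinfun_apply (Dinv (\<psi> w))) (at (phi_of F (\<psi> w)) within phi_of F ` S)"
    proof (rule has_derivative_inverse_within[OF phi_der[OF \<psi>S[OF w]]])
      show "continuous (at (phi_of F (\<psi> w)) within phi_of F ` S) \<psi>"
        using c\<psi> \<psi>S[OF w] by (simp add: continuous_on_eq_continuous_within)
      show "\<psi> w \<in> S" by (rule \<psi>S[OF w])
      show "linear (blinfun_apply (Dinv (\<psi> w)))" by (rule bounded_linear.linear[OF blinfun.bounded_linear_right])
      show "blinfun_apply (Dinv (\<psi> w)) \<circ> blinfun_apply (Dphi (\<psi> w)) = id"
        using Dinv_props(1)[OF \<psi>S[OF w]] by (simp add: fun_eq_iff)
      show "\<And>x. x \<in> S \<Longrightarrow> \<psi> (phi_of F x) = x" by (rule \<psi>1)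
    qed
    then show ?thesis using \<psi>2[OF w] by simp
  qed
  have hphi: "holder_norm \<beta> S Dphi \<le> ennreal Cs"
  proof -
    have "holder_norm \<beta> S Dphi \<le> ennreal (L + 2)"
    proof (rule holder_le)
      show "\<And>z. z \<in> S \<Longrightarrow> norm (Dphi z) \<le> L" by (rule Dphi_norm)
      fix z z' assume "z \<in> S" "z' \<in> S"
      then show "norm (Dphi z - Dphi z') \<le> 2 * dist z z' powr \<beta>"
        using Dphi_diff[of z z'] DF_hol[of z z'] by linarith
    qed (use L0 in auto)
    also have "\<dots> \<le> ennreal Cs" using CsL by (rule ennreal_leI)
    finally show ?thesis .
  qed
  have hpsi: "holder_norm \<beta> (phi_of F ` S) (\<lambda>w. Dinv (\<psi> w)) \<le> ennreal Cs"
  proof -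
    have "holder_norm \<beta> (phi_of F ` S) (\<lambda>w. Dinv (\<psi> w)) \<le> ennreal (L + 2 * L ^ 3)"
    proof (rule holder_le)
      show "\<And>w. w \<in> phi_of F ` S \<Longrightarrow> norm (Dinv (\<psi> w)) \<le> L" using Dinv_norm \<psi>S by blast
      fix w w' assume w: "w \<in> phi_of F ` S" and w': "w' \<in> phi_of F ` S"
      define z where "z = \<psi> w"
      define z' where "z' = \<psi> w'"
      have z: "z \<in> S" "z' \<in> S" using \<psi>S w w' by (auto simp: z_def z'_def)
      have wz: "w = phi_of F z" "w' = phi_of F z'" using \<psi>2 w w' by (auto simp: z_def z'_def)
      have dz: "dist z z' \<le> L * dist w w'" using phi_lower[OF z] wz by (simp add: dist_norm)
      have "norm (Dinv z - Dinv z') \<le> L * L * norm (Dphi z - Dphi z')" by (rule Dinv_diff[OF z])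
      also have "\<dots> \<le> L * L * (2 * dist z z' powr \<beta>)"
        using Dphi_diff[of z z'] DF_hol[OF z] L0 by (intro mult_left_mono) auto
      also have "dist z z' powr \<beta> \<le> (L * dist w w') powr \<beta>"
        using dz b0 by (intro powr_mono2) auto
      also have "(L * dist w w') powr \<beta> = L powr \<beta> * dist w w' powr \<beta>"
        using L0 by (simp add: powr_mult)
      also have "L powr \<beta> \<le> L powr 1" using L1 b0 ba a1 by (intro powr_mono) auto
      finally have "norm (Dinv z - Dinv z') \<le> L * L * (2 * (L * dist w w' powr \<beta>))"
        using L0 L1 by (simp add: mult_left_mono mult_right_mono)
      then show "norm (Dinv (\<psi> w) - Dinv (\<psi> w')) \<le> 2 * L ^ 3 * dist w w' powr \<beta>"
        by (simp add: z_def z'_def power3_eq_cube mult_ac)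
    qed (use L0 in auto)
    then show ?thesis by (simp add: Cs_def)
  qed
  have sub: "pbox m (C0 / Cs) \<subseteq> phi_of F ` S"
  proof
    fix w assume "w \<in> pbox m (C0 / Cs)"
    then obtain u v where w: "w = (u, v)" "u \<in> cball xm (C0 / Cs)" "v \<in> cball ym (C0 / Cs)"
      by (cases w) (auto simp: pbox_def)
    obtain x where x: "x \<in> cball xm C0" "F (x, v) = u" using surj_aux[OF Cs1 w(2,3)] by blast
    have "C0 / Cs \<le> C0" using Cs1 K0 C0 by (simp add: divide_le_eq mult_le_cancel_left1 field_simps)
    then have "v \<in> cball ym C0" using w(3) by auto
    then have "(x, v) \<in> S" using x by (simp add: memS)
    moreover have "phi_of F (x, v) = w" using x w by (simp add: phi_of_def)
    ultimately show "w \<in> phi_of F ` S" by (metis imageI)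
  qed
  have ids: "Dinv (\<psi> w) o\<^sub>L Dphi (\<psi> (w)) = id_blinfun \<and> Dphi (\<psi> w) o\<^sub>L Dinv (\<psi> w) = id_blinfun"
    if "w \<in> phi_of F ` S" for w
    using Dinv_props[OF \<psi>S[OF that]] by (auto intro!: blinfun_eqI)
  show ?thesis
    apply (rule conjI[OF inj])
    apply (rule conjI[OF _ sub[unfolded Cs_def]])
    apply (rule exI[of _ Dphi], rule exI[of _ "\<lambda>w. Dinv (\<psi> w)"], rule exI[of _ \<psi>])
    using phi_der cDphi \<psi>1 der\<psi> ids cD\<psi> hphi hpsi unfolding Cs_def by blast
qed

end

theorem mainTheorem7:
  fixes \<alpha> \<beta> :: real
  assumes "0 < \<alpha>" "\<alpha> \<le> 1" "0 < \<beta>" "\<beta> \<le> \<alpha>"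
  shows "\<forall>Cs :: ('u::euclidean_space \<times> 's::euclidean_space) set.
     cone_of_dim Cs DIM('s) \<and> cone_transverse Cs DIM('s) {z. snd z = 0} \<longrightarrow>
     (\<exists>Csharp > 0. \<forall>m C0 C1 F. 1 < C0 \<and> C0 < C1 / 2 \<and> F \<in> F_class \<alpha> \<beta> m Cs C0 C1 \<longrightarrow>
        inj_on (phi_of F) (pbox m C0) \<and>
        (\<exists>D\<phi> D\<psi> \<psi>.
           (\<forall>z\<in>pbox m C0. (phi_of F has_derivative blinfun_apply (D\<phi> z)) (at z within pbox m C0)) \<and>
           continuous_on (pbox m C0) D\<phi> \<and>
           (\<forall>z\<in>pbox m C0. \<psi> (phi_of F z) = z) \<and>
           (\<forall>w\<in>phi_of F ` pbox m C0.
              (\<psi> has_derivative blinfun_apply (D\<psi> w)) (at w within phi_of F ` pbox m C0) \<and>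
              D\<psi> w o\<^sub>L D\<phi> (\<psi> w) = id_blinfun \<and> D\<phi> (\<psi> w) o\<^sub>L D\<psi> w = id_blinfun) \<and>
           continuous_on (phi_of F ` pbox m C0) D\<psi> \<and>
           holder_norm \<beta> (pbox m C0) D\<phi> \<le> ennreal Csharp \<and>
           holder_norm \<beta> (phi_of F ` pbox m C0) D\<psi> \<le> ennreal Csharp) \<and>
        pbox m (C0 / Csharp) \<subseteq> phi_of F ` pbox m C0)"
proof (intro allI impI)
  fix Cs :: "('u \<times> 's) set"
  assume H: "cone_of_dim Cs DIM('s) \<and> cone_transverse Cs DIM('s) {z. snd z = 0}"
  have cl: "closed Cs" and sc: "\<And>t v. v \<in> Cs \<Longrightarrow> t *\<^sub>R v \<in> Cs"
    using H unfolding cone_of_dim_def by blast+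
  have tr: "\<And>a. (a, 0) \<in> Cs \<Longrightarrow> a = 0" using transverse_aux H by blast
  obtain K where K0: "0 \<le> K" and K: "\<And>a b. (a, b) \<in> Cs \<Longrightarrow> norm a \<le> K * norm b"
    using cone_bound_aux[OF cl sc tr] by blast
  define L where "L = 3 + 2 * K"
  have Lpos: "0 < L + 2 * L ^ 3" using K0 by (simp add: L_def add_pos_nonneg)
  show "\<exists>Csharp > 0. \<forall>m C0 C1 F. 1 < C0 \<and> C0 < C1 / 2 \<and> F \<in> F_class \<alpha> \<beta> m Cs C0 C1 \<longrightarrow>
        inj_on (phi_of F) (pbox m C0) \<and>
        (\<exists>D\<phi> D\<psi> \<psi>.
           (\<forall>z\<in>pbox m C0. (phi_of F has_derivative blinfun_apply (D\<phi> z)) (at z within pbox m C0)) \<and>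
           continuous_on (pbox m C0) D\<phi> \<and>
           (\<forall>z\<in>pbox m C0. \<psi> (phi_of F z) = z) \<and>
           (\<forall>w\<in>phi_of F ` pbox m C0.
              (\<psi> has_derivative blinfun_apply (D\<psi> w)) (at w within phi_of F ` pbox m C0) \<and>
              D\<psi> w o\<^sub>L D\<phi> (\<psi> w) = id_blinfun \<and> D\<phi> (\<psi> w) o\<^sub>L D\<psi> w = id_blinfun) \<and>
           continuous_on (phi_of F ` pbox m C0) D\<psi> \<and>
           holder_norm \<beta> (pbox m C0) D\<phi> \<le> ennreal Csharp \<and>
           holder_norm \<beta> (phi_of F ` pbox m C0) D\<psi> \<le> ennreal Csharp) \<and>
        pbox m (C0 / Csharp) \<subseteq> phi_of F ` pbox m C0"
  proof (rule exI[of _ "L + 2 * L ^ 3"], rule conjI[OF Lpos], intro allI impI)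
    fix m :: "'u \<times> 's" and C0 C1 :: real and F
    assume A: "1 < C0 \<and> C0 < C1 / 2 \<and> F \<in> F_class \<alpha> \<beta> m Cs C0 C1"
    then obtain DF :: "'u \<times> 's \<Rightarrow> ('u \<times> 's) \<Rightarrow>\<^sub>L 'u" where
      d1: "\<forall>z\<in>pbox m C0. (F has_derivative blinfun_apply (DF z)) (at z within pbox m C0)" and
      d2: "continuous_on (pbox m C0) DF" and
      d3: "\<forall>z\<in>pbox m C0. \<forall>w::'s. (DF z (0, w), w) \<in> Cs" and
      d4: "\<forall>x\<in>cball (fst m) C0. F (x, snd m) = x" and
      d5: "\<forall>x y x' y'. (x, y) \<in> pbox m C0 \<longrightarrow> (x', y') \<in> pbox m C0 \<longrightarrow>
        norm (DF (x, y) - DF (x, y')) \<le> dist y y' powr \<alpha> / C1 \<and>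
        norm (DF (x, y) - DF (x', y)) \<le> dist x x' powr \<beta> / C1 \<and>
        norm (DF (x, y) - DF (x, y') - DF (x', y) + DF (x', y'))
           \<le> dist x x' powr \<beta> * dist y y' powr (\<alpha> - \<beta>) / C1"
      unfolding F_class_def by blast
    interpret fs: fsetup \<alpha> \<beta> C0 C1 K m F DF
    proof
      show "0 < \<alpha>" "\<alpha> \<le> 1" "0 < \<beta>" "\<beta> \<le> \<alpha>" by fact+
      show "1 < C0" "C0 < C1 / 2" using A by auto
      show "0 \<le> K" by fact
      show "\<And>z. z \<in> pbox m C0 \<Longrightarrow> (F has_derivative blinfun_apply (DF z)) (at z within pbox m C0)"
        using d1 by blast
      show "continuous_on (pbox m C0) DF" by fact
      show "\<And>z k. z \<in> pbox m C0 \<Longrightarrow> norm (DF z (0, k)) \<le> K * norm k" using d3 K by blast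
      show "\<And>x. x \<in> cball (fst m) C0 \<Longrightarrow> F (x, snd m) = x" using d4 by blast
      show "\<And>x y y'. (x, y) \<in> pbox m C0 \<Longrightarrow> (x, y') \<in> pbox m C0 \<Longrightarrow>
        norm (DF (x, y) - DF (x, y')) \<le> dist y y' powr \<alpha> / C1" using d5 by blast
      show "\<And>x x' y. (x, y) \<in> pbox m C0 \<Longrightarrow> (x', y) \<in> pbox m C0 \<Longrightarrow>
        norm (DF (x, y) - DF (x', y)) \<le> dist x x' powr \<beta> / C1" using d5 by blast
    qed
    show "inj_on (phi_of F) (pbox m C0) \<and>
        (\<exists>D\<phi> D\<psi> \<psi>.
           (\<forall>z\<in>pbox m C0. (phi_of F has_derivative blinfun_apply (D\<phi> z)) (at z within pbox m C0)) \<and>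
           continuous_on (pbox m C0) D\<phi> \<and>
           (\<forall>z\<in>pbox m C0. \<psi> (phi_of F z) = z) \<and>
           (\<forall>w\<in>phi_of F ` pbox m C0.
              (\<psi> has_derivative blinfun_apply (D\<psi> w)) (at w within phi_of F ` pbox m C0) \<and>
              D\<psi> w o\<^sub>L D\<phi> (\<psi> w) = id_blinfun \<and> D\<phi> (\<psi> w) o\<^sub>L D\<psi> w = id_blinfun) \<and>
           continuous_on (phi_of F ` pbox m C0) D\<psi> \<and>
           holder_norm \<beta> (pbox m C0) D\<phi> \<le> ennreal (L + 2 * L ^ 3) \<and>
           holder_norm \<beta> (phi_of F ` pbox m C0) D\<psi> \<le> ennreal (L + 2 * L ^ 3)) \<and>
        pbox m (C0 / (L + 2 * L ^ 3)) \<subseteq> phi_of F ` pbox m C0"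
      unfolding L_def by (rule fs.main_local)
  qed
qed

end
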